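(* Let $0<\alpha<\frac12$, let $k\ge1$ be an integer, and let $z_1,\ldots,z_k$ be independent random variables each uniformly distributed on $[\alpha-\frac12,\frac12-\alpha]$, with mean $\bar z=\frac1k\sum_{i=1}^k z_i$. Then for any $\beta>0$, \[\mathbb{E}\Bigl(\exp\Bigl(-\beta\sum_{i=1}^k (z_i-\bar z)^2\Bigr)\Bigr)\le k^{1/2}\Bigl(\frac{\pi}{(1-2\alpha)^2\beta}\Bigr)^{(k-1)/2}.\] *)

theory Defs
  imports "HOL-Probability.Probability"
begin

end

theory Submission
  imports Defs "HOL-Probability.Probability"
begin

definition SS :: "nat \<Rightarrow> (nat \<Rightarrow> real) \<Rightarrow> real" where
  "SS n x = (\<Sum>i=1..n. (x i - (\<Sum>j=1..n. x j) / real n)\<^sup>2)"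

lemma SS_alt:
  assumes "n \<ge> 1"
  shows "SS n x = (\<Sum>i=1..n. (x i)\<^sup>2) - (\<Sum>j=1..n. x j)\<^sup>2 / real n"
proof -
  define s where "s = (\<Sum>j=1..n. x j)"
  define c where "c = s / n"
  have "SS n x = (\<Sum>i=1..n. (x i)\<^sup>2 - 2 * c * x i + c\<^sup>2)"
    unfolding SS_def s_def[symmetric] c_def[symmetric] by (intro sum.cong) (auto simp: power2_diff)
  also have "\<dots> = (\<Sum>i=1..n. (x i)\<^sup>2) - (\<Sum>i=1..n. 2 * c * x i) + (\<Sum>i=1..n. c\<^sup>2)"
    by (simp only: sum.distrib sum_subtractf)
  also have "(\<Sum>i=1..n. 2 * c * x i) = 2 * c * s"
    unfolding s_def by (rule sum_distrib_left[symmetric])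
  also have "(\<Sum>i=1..n. c\<^sup>2) = n * c\<^sup>2" by simp
  also have "(\<Sum>i=1..n. (x i)\<^sup>2) - 2 * c * s + n * c\<^sup>2 = (\<Sum>i=1..n. (x i)\<^sup>2) - s\<^sup>2 / n"
    using assms unfolding c_def by (simp add: field_simps power2_eq_square)
  finally show ?thesis by (simp add: s_def)
qed

lemma SS_Suc:
  assumes "n \<ge> 1"
  shows "SS (Suc n) x = SS n x + real n / (real n + 1) * (x (Suc n) - (\<Sum>j=1..n. x j) / real n)\<^sup>2"
proof -
  define s where "s = (\<Sum>j=1..n. x j)"
  define q where "q = (\<Sum>j=1..n. (x j)\<^sup>2)"
  define y where "y = x (Suc n)"
  have "SS (Suc n) x = q + y\<^sup>2 - (s + y)\<^sup>2 / (real n + 1)"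
    using SS_alt[of "Suc n" x] by (simp add: s_def q_def y_def)
  moreover have "SS n x = q - s\<^sup>2 / n" using SS_alt[OF assms] by (simp add: s_def q_def)
  moreover have "q + y\<^sup>2 - (s + y)\<^sup>2 / (real n + 1) = q - s\<^sup>2 / n + real n / (real n + 1) * (y - s / n)\<^sup>2"
  proof -
    have N: "real n > 0" "real n + 1 > 0" using assms by auto
    show ?thesis using N
      apply (simp add: divide_simps power2_eq_square)
      apply (simp add: algebra_simps)
      done
  qed
  ultimately show ?thesis by (simp add: s_def y_def)
qed

lemma SS_upd: "SS n (x(Suc n := y)) = SS n x"
proof -
  have h: "(\<Sum>j=1..n. (x(Suc n := y)) j) = (\<Sum>j=1..n. x j)" by (rule sum.cong) auto
  show ?thesis unfolding SS_def h by (rule sum.cong) auto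
qed

lemma SS_restrict: "SS n (restrict x {1..n}) = SS n x"
proof -
  have h: "(\<Sum>j=1..n. (restrict x {1..n}) j) = (\<Sum>j=1..n. x j)" by (rule sum.cong) (auto simp: restrict_def)
  show ?thesis unfolding SS_def h by (rule sum.cong) (auto simp: restrict_def)
qed


lemma SS_meas:
  assumes "sets N = sets borel"
  shows "SS n \<in> borel_measurable (PiM {1..n} (\<lambda>_. N))"
proof -
  have c[measurable]: "(\<lambda>x. x i) \<in> borel_measurable (PiM {1..n} (\<lambda>_. N))" if "i \<in> {1..n}" for i
  proof -
    have "measurable (PiM {1..n} (\<lambda>_. N)) N = measurable (PiM {1..n} (\<lambda>_. N)) borel"
      by (rule measurable_cong_sets[OF refl assms])
    then show ?thesis using measurable_component_singleton[OF that, of "\<lambda>_. N"] by simp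
  qed
  show ?thesis unfolding SS_def
    apply (rule borel_measurable_sum)
    apply (rule borel_measurable_power)
    apply (rule borel_measurable_diff)
    apply (erule c)
    apply (rule borel_measurable_divide)
    apply (rule borel_measurable_sum)
    apply (erule c)
    apply (rule measurable_const)
    apply simp
    done
qed

lemma gauss_nn:
  fixes c m :: real assumes "c > 0"
  shows "(\<integral>\<^sup>+ y. ennreal (exp (- c * (y - m)\<^sup>2)) \<partial>lborel) = ennreal (sqrt (pi / c))"
proof -
  define \<sigma> where "\<sigma> = sqrt (1 / (2*c))"
  have s: "\<sigma> > 0" "\<sigma>\<^sup>2 = 1/(2*c)" using assms by (auto simp: \<sigma>_def)
  have eq: "exp (- c * (y - m)\<^sup>2) = sqrt (pi / c) * normal_density m \<sigma> y" for y
  proof -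
    have "2 * pi * \<sigma>\<^sup>2 = pi / c" using s assms by (simp add: field_simps)
    moreover have "-(y - m)\<^sup>2/ (2 * \<sigma>\<^sup>2) = - c * (y - m)\<^sup>2" using s assms by (simp add: field_simps)
    ultimately show ?thesis using assms by (simp add: normal_density_def)
  qed
  have "(\<integral>\<^sup>+ y. ennreal (exp (- c * (y - m)\<^sup>2)) \<partial>lborel) = (\<integral>\<^sup>+ y. ennreal (sqrt (pi / c)) * ennreal (normal_density m \<sigma> y) \<partial>lborel)"
    apply (intro nn_integral_cong)
    apply (unfold eq)
    apply (rule ennreal_mult)
    using assms by auto
  also have "\<dots> = ennreal (sqrt (pi / c)) * (\<integral>\<^sup>+ y. ennreal (normal_density m \<sigma> y) \<partial>lborel)"
    by (simp add: nn_integral_cmult)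
  also have "(\<integral>\<^sup>+ y. ennreal (normal_density m \<sigma> y) \<partial>lborel) = 1"
    using integrable_normal_density[OF s(1)] integral_normal_density[OF s(1)] by (subst nn_integral_eq_integral) auto
  finally show ?thesis by simp
qed

lemma gauss_unif:
  fixes a b c m :: real assumes "c > 0" "a < b"
  shows "(\<integral>\<^sup>+ y. ennreal (exp (- c * (y - m)\<^sup>2)) \<partial>uniform_measure lborel {a..b}) \<le> ennreal (sqrt (pi / c) / (b - a))"
proof -
  have "(\<integral>\<^sup>+ y. ennreal (exp (- c * (y - m)\<^sup>2)) \<partial>uniform_measure lborel {a..b})
      = (\<integral>\<^sup>+ y. ennreal (exp (- c * (y - m)\<^sup>2)) * indicator {a..b} y \<partial>lborel) / ennreal (b - a)"
    using assms by (subst nn_integral_uniform_measure) auto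
  also have "\<dots> \<le> (\<integral>\<^sup>+ y. ennreal (exp (- c * (y - m)\<^sup>2)) \<partial>lborel) / ennreal (b - a)"
    by (intro divide_right_mono_ennreal nn_integral_mono) (auto simp: indicator_def)
  also have "\<dots> = ennreal (sqrt (pi / c) / (b - a))"
    unfolding gauss_nn[OF assms(1)] using assms by (simp add: divide_ennreal)
  finally show ?thesis .
qed


lemma main_bound:
  fixes a b \<beta> :: real
  assumes ab: "a < b" and bp: "\<beta> > 0" and n: "n \<ge> 1"
  defines "U \<equiv> uniform_measure lborel {a..b}"
  shows "(\<integral>\<^sup>+ x. ennreal (exp (- \<beta> * SS n x)) \<partial>PiM {1..n} (\<lambda>_. U))
           \<le> ennreal (sqrt (real n) * (sqrt (pi / \<beta>) / (b - a)) ^ (n - 1))"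
  using n
proof (induction n rule: nat_induct_at_least)
  case base
  have pU: "prob_space U" unfolding U_def using ab by (intro prob_space_uniform_measure) auto
  have pP: "prob_space (PiM {Suc 0} (\<lambda>_. U))" by (rule prob_space_PiM) (use pU in auto)
  have z: "SS (Suc 0) x = 0" for x by (simp add: SS_def)
  have "(\<integral>\<^sup>+ x. ennreal (exp (- \<beta> * SS 1 x)) \<partial>PiM {1..1} (\<lambda>_. U)) = 1"
    using pP by (simp add: z prob_space.emeasure_space_1)
  then show ?case by simp
next
  case (Suc n)
  have pU: "prob_space U" unfolding U_def using ab by (intro prob_space_uniform_measure) auto
  interpret product_sigma_finite "\<lambda>_::nat. U" by (simp add: product_sigma_finite_def prob_space_imp_sigma_finite[OF pU])
  have setsU: "sets U = sets borel" unfolding U_def by simp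
  define c where "c = sqrt (pi / \<beta>) / (b - a)"
  define d where "d = real n / (real n + 1) * \<beta>"
  have dp: "d > 0" using Suc.hyps bp by (simp add: d_def)
  define K where "K = sqrt (pi / d) / (b - a)"
  have ins: "{1..Suc n} = insert (Suc n) {1..n}" by auto
  have meas: "(\<lambda>x. ennreal (exp (- \<beta> * SS (Suc n) x))) \<in> borel_measurable (PiM (insert (Suc n) {1..n}) (\<lambda>_. U))"
    using SS_meas[OF setsU, of "Suc n"] unfolding ins by measurable
  have inner: "(\<integral>\<^sup>+ y. ennreal (exp (- \<beta> * SS (Suc n) (x(Suc n := y)))) \<partial>U)
       \<le> ennreal (exp (- \<beta> * SS n x)) * ennreal K" for x
  proof -
    define m where "m = (\<Sum>j=1..n. x j) / real n"
    have h: "(\<Sum>j=1..n. (x(Suc n := y)) j) = (\<Sum>j=1..n. x j)" for y by (rule sum.cong) auto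
    have eq: "exp (- \<beta> * SS (Suc n) (x(Suc n := y))) = exp (- \<beta> * SS n x) * exp (- d * (y - m)\<^sup>2)" for y
      using SS_Suc[OF Suc.hyps, of "x(Suc n := y)"] SS_upd[of n x y] h[of y]
      by (simp add: m_def d_def exp_add[symmetric] algebra_simps)
    have "(\<integral>\<^sup>+ y. ennreal (exp (- \<beta> * SS (Suc n) (x(Suc n := y)))) \<partial>U)
        = (\<integral>\<^sup>+ y. ennreal (exp (- \<beta> * SS n x)) * ennreal (exp (- d * (y - m)\<^sup>2)) \<partial>U)"
      apply (intro nn_integral_cong)
      apply (unfold eq)
      apply (rule ennreal_mult)
      by auto
    also have "\<dots> = ennreal (exp (- \<beta> * SS n x)) * (\<integral>\<^sup>+ y. ennreal (exp (- d * (y - m)\<^sup>2)) \<partial>U)"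
      by (rule nn_integral_cmult) (simp add: U_def)
    also have "\<dots> \<le> ennreal (exp (- \<beta> * SS n x)) * ennreal K"
      unfolding K_def U_def by (intro mult_left_mono gauss_unif dp ab) auto
    finally show ?thesis .
  qed
  have "(\<integral>\<^sup>+ x. ennreal (exp (- \<beta> * SS (Suc n) x)) \<partial>PiM {1..Suc n} (\<lambda>_. U))
      = (\<integral>\<^sup>+ x. (\<integral>\<^sup>+ y. ennreal (exp (- \<beta> * SS (Suc n) (x(Suc n := y)))) \<partial>U) \<partial>PiM {1..n} (\<lambda>_. U))"
    unfolding ins by (rule product_nn_integral_insert[OF _ _ meas]) auto
  also have "\<dots> \<le> (\<integral>\<^sup>+ x. ennreal (exp (- \<beta> * SS n x)) * ennreal K \<partial>PiM {1..n} (\<lambda>_. U))"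
    by (intro nn_integral_mono inner)
  also have "\<dots> = (\<integral>\<^sup>+ x. ennreal (exp (- \<beta> * SS n x)) \<partial>PiM {1..n} (\<lambda>_. U)) * ennreal K"
    by (rule nn_integral_multc) (use SS_meas[OF setsU, of n] in measurable)
  also have "\<dots> \<le> ennreal (sqrt (real n) * c ^ (n - 1)) * ennreal K"
    using Suc.IH unfolding c_def by (intro mult_right_mono) auto
  also have "\<dots> = ennreal (sqrt (real (Suc n)) * c ^ (Suc n - 1))"
  proof -
    have cp: "c > 0" using ab bp by (simp add: c_def)
    have "K = c * sqrt ((real n + 1) / real n)"
    proof -
      have "pi / d = (pi / \<beta>) * ((real n + 1) / real n)"
        using Suc.hyps bp by (simp add: d_def field_simps)
      then have "sqrt (pi / d) = sqrt (pi / \<beta>) * sqrt ((real n + 1) / real n)"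
        by (simp only: real_sqrt_mult)
      then show ?thesis by (simp add: K_def c_def)
    qed
    then have "sqrt (real n) * c ^ (n - 1) * K = sqrt (real (Suc n)) * c ^ (Suc n - 1)"
      using Suc.hyps cp
      apply (simp add: real_sqrt_divide)
      apply (cases n) apply simp apply (simp add: field_simps)
      done
    moreover have "sqrt (real n) * c ^ (n - 1) \<ge> 0" using cp by simp
    moreover have "K \<ge> 0" using ab dp by (simp add: K_def)
    ultimately show ?thesis by (metis ennreal_mult)
  qed
  finally show ?case unfolding c_def .
qed


theorem lemma5:
  fixes M :: "'a measure" and Z :: "nat \<Rightarrow> 'a \<Rightarrow> real"
    and \<alpha> \<beta> :: real and k :: nat
  assumes "prob_space M"
    and "0 < \<alpha>" and "\<alpha> < 1/2"
    and "k \<ge> 1"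
    and "\<beta> > 0"
    and "\<And>i. i \<in> {1..k} \<Longrightarrow> Z i \<in> borel_measurable M"
    and "prob_space.indep_vars M (\<lambda>_. borel) Z {1..k}"
    and "\<And>i. i \<in> {1..k} \<Longrightarrow>
           distr M borel (Z i) = uniform_measure lborel {\<alpha> - 1/2 .. 1/2 - \<alpha>}"
  shows "prob_space.expectation M
           (\<lambda>\<omega>. exp (- \<beta> * (\<Sum>i=1..k. (Z i \<omega> - (\<Sum>j=1..k. Z j \<omega>) / real k)\<^sup>2)))
         \<le> sqrt (real k) * (pi / ((1 - 2*\<alpha>)\<^sup>2 * \<beta>)) powr ((real k - 1) / 2)"
proof -
  interpret P: prob_space M by fact
  define a where "a = \<alpha> - 1/2"
  define b where "b = 1/2 - \<alpha>"
  have ab: "a < b" using assms by (simp add: a_def b_def)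
  define U where "U = uniform_measure lborel {a..b}"
  define X where "X = (\<lambda>\<omega>. \<lambda>i\<in>{1..k}. Z i \<omega>)"
  define G where "G = (\<lambda>x. exp (- \<beta> * SS k x))"
  have f_eq: "exp (- \<beta> * (\<Sum>i=1..k. (Z i \<omega> - (\<Sum>j=1..k. Z j \<omega>) / real k)\<^sup>2)) = G (X \<omega>)" for \<omega>
    unfolding G_def X_def SS_restrict by (simp add: SS_def)
  have Xm: "X \<in> measurable M (PiM {1..k} (\<lambda>_. borel))"
    unfolding X_def by (rule measurable_restrict) (rule assms(6))
  have Gm: "G \<in> borel_measurable (PiM {1..k} (\<lambda>_. borel))"
    unfolding G_def using SS_meas[of borel k] by measurable
  have "distr M (PiM {1..k} (\<lambda>_. borel)) X = PiM {1..k} (\<lambda>i. distr M borel (Z i))"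
    unfolding X_def
    using P.indep_vars_iff_distr_eq_PiM'[where I="{1..k}" and M'="\<lambda>_. borel" and X=Z] assms(4,6,7) by auto
  also have "\<dots> = PiM {1..k} (\<lambda>_. U)"
    by (rule PiM_cong) (auto simp: assms(8) U_def a_def b_def)
  finally have dist: "distr M (PiM {1..k} (\<lambda>_. borel)) X = PiM {1..k} (\<lambda>_. U)" .
  have "P.expectation (\<lambda>\<omega>. exp (- \<beta> * (\<Sum>i=1..k. (Z i \<omega> - (\<Sum>j=1..k. Z j \<omega>) / real k)\<^sup>2)))
      = P.expectation (\<lambda>\<omega>. G (X \<omega>))" by (simp only: f_eq)
  also have "\<dots> = enn2real (\<integral>\<^sup>+ \<omega>. ennreal (G (X \<omega>)) \<partial>M)"
    by (rule integral_eq_nn_integral) (use Gm Xm in \<open>auto simp: G_def\<close>)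
  also have "(\<integral>\<^sup>+ \<omega>. ennreal (G (X \<omega>)) \<partial>M) = (\<integral>\<^sup>+ x. ennreal (G x) \<partial>distr M (PiM {1..k} (\<lambda>_. borel)) X)"
    by (rule nn_integral_distr[symmetric]) (use Gm Xm in auto)
  also have "\<dots> = (\<integral>\<^sup>+ x. ennreal (exp (- \<beta> * SS k x)) \<partial>PiM {1..k} (\<lambda>_. U))"
    unfolding dist G_def ..
  finally have E: "P.expectation (\<lambda>\<omega>. exp (- \<beta> * (\<Sum>i=1..k. (Z i \<omega> - (\<Sum>j=1..k. Z j \<omega>) / real k)\<^sup>2)))
      = enn2real (\<integral>\<^sup>+ x. ennreal (exp (- \<beta> * SS k x)) \<partial>PiM {1..k} (\<lambda>_. U))" .
  define c where "c = sqrt (pi / \<beta>) / (b - a)"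
  have bnd: "(\<integral>\<^sup>+ x. ennreal (exp (- \<beta> * SS k x)) \<partial>PiM {1..k} (\<lambda>_. U)) \<le> ennreal (sqrt (real k) * c ^ (k - 1))"
    unfolding U_def c_def by (rule main_bound[OF ab assms(5,4)])
  define y where "y = pi / ((1 - 2*\<alpha>)\<^sup>2 * \<beta>)"
  have yp: "y > 0" using assms by (simp add: y_def)
  have ba: "b - a = 1 - 2*\<alpha>" by (simp add: a_def b_def)
  have "sqrt y = sqrt (pi / \<beta>) / (1 - 2*\<alpha>)"
  proof -
    have "y = (pi / \<beta>) / (1 - 2*\<alpha>)\<^sup>2" by (simp add: y_def field_simps)
    then have "sqrt y = sqrt (pi / \<beta>) / sqrt ((1 - 2*\<alpha>)\<^sup>2)" by (simp only: real_sqrt_divide)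
    then show ?thesis using assms by simp
  qed
  then have cy: "c = y powr (1/2)" using yp by (simp add: c_def ba powr_half_sqrt)
  have "c ^ (k - 1) = y powr ((real k - 1) / 2)"
    using yp assms(4) by (simp add: cy powr_power of_nat_diff)
  then have "enn2real (\<integral>\<^sup>+ x. ennreal (exp (- \<beta> * SS k x)) \<partial>PiM {1..k} (\<lambda>_. U)) \<le> sqrt (real k) * y powr ((real k - 1) / 2)"
    using bnd by (intro enn2real_leI) auto
  then show ?thesis unfolding E y_def .
qed

end
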